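(* (i) For every $B\in\mathrm{M}_2(E_1)$, \[\{\mathrm{tr}(B)\mathrm{tr}(B^2)-\mathrm{tr}(B^3)\}I_2-\mathrm{tr}(B^2)B-\mathrm{tr}(B)B^2+2B^3=0.\] (ii) For every $B\in\mathrm{M}_3(E_1)$, \[\Big\{-\tfrac12\mathrm{tr}(B^2)^2\mathrm{tr}(B)+\mathrm{tr}(B^3)\mathrm{tr}(B^2)+\tfrac12\mathrm{tr}(B^4)\mathrm{tr}(B)-\mathrm{tr}(B^5)\Big\}I_3+\Big\{\tfrac12\mathrm{tr}(B^2)^2-\tfrac12\mathrm{tr}(B^4)\Big\}B\] \[+\{\mathrm{tr}(B^2)\mathrm{tr}(B)-\mathrm{tr}(B^3)\}B^2-2\mathrm{tr}(B^2)B^3-\mathrm{tr}(B)B^4+3B^5=0.\]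
   Context: $K$ is a field of characteristic zero. $E$ is the infinite-dimensional Grassmann (exterior) algebra over $K$, generated by countably many indeterminates $v_1,v_2,\dots$ subject to $v_iv_j+v_jv_i=0$ for all $i,j$. $E=E_0\oplus E_1$ is its natural $\mathbb{Z}_2$-grading: $E_0$ (resp. $E_1$) is the $K$-span of products of an even (resp. odd) number of generators. $\mathrm{M}_n(E_1)$ denotes the $n\times n$ matrices with entries in $E_1$, $I_n$ the identity matrix, $\mathrm{tr}$ the sum of diagonal entries; $\mathrm{tr}(B^2)^2$ means $(\mathrm{tr}(B^2))^2$. *)

theory Defs
  imports Main
begin

text \<open>Grassmann algebra E over a field K (type 'a) on generators v_0, v_1, ... .
An element is a coefficient function on finite sets of generator indices
(monomial v_S = product of v_i, i in S, in increasing order) with finite support.\<close>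

type_synonym 'a grass = "nat set \<Rightarrow> 'a"

definition gsign :: "nat set \<Rightarrow> nat set \<Rightarrow> 'a::comm_ring_1" where
  "gsign S T = (-1) ^ card {(i,j). i \<in> S \<and> j \<in> T \<and> j < i}"

definition gzero :: "'a::comm_ring_1 grass" where "gzero = (\<lambda>U. 0)"
definition gone :: "'a::comm_ring_1 grass" where "gone = (\<lambda>U. if U = {} then 1 else 0)"
definition gadd :: "'a::comm_ring_1 grass \<Rightarrow> 'a grass \<Rightarrow> 'a grass" where
  "gadd x y = (\<lambda>U. x U + y U)"
definition gsub :: "'a::comm_ring_1 grass \<Rightarrow> 'a grass \<Rightarrow> 'a grass" where
  "gsub x y = (\<lambda>U. x U - y U)"
definition gscal :: "'a::comm_ring_1 \<Rightarrow> 'a grass \<Rightarrow> 'a grass" where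
  "gscal c x = (\<lambda>U. c * x U)"
text \<open>v_S v_T = gsign S T v_(S \<union> T) if S, T disjoint, and 0 otherwise.\<close>
definition gmul :: "'a::comm_ring_1 grass \<Rightarrow> 'a grass \<Rightarrow> 'a grass" where
  "gmul x y = (\<lambda>U. if finite U then (\<Sum>S\<in>Pow U. gsign S (U - S) * x S * y (U - S)) else 0)"

definition is_grass :: "'a::comm_ring_1 grass \<Rightarrow> bool" where
  "is_grass x \<longleftrightarrow> finite {S. x S \<noteq> 0} \<and> (\<forall>S. x S \<noteq> 0 \<longrightarrow> finite S)"

definition is_odd_grass :: "'a::comm_ring_1 grass \<Rightarrow> bool" where
  "is_odd_grass x \<longleftrightarrow> is_grass x \<and> (\<forall>S. x S \<noteq> 0 \<longrightarrow> odd (card S))"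

text \<open>n x n matrices over E, as functions nat => nat => grass (only indices < n matter).\<close>
type_synonym 'a gmat = "nat \<Rightarrow> nat \<Rightarrow> 'a grass"

definition gsum :: "nat \<Rightarrow> (nat \<Rightarrow> 'a::comm_ring_1 grass) \<Rightarrow> 'a grass" where
  "gsum n f = (\<lambda>U. \<Sum>k<n. f k U)"

definition mone :: "'a::comm_ring_1 gmat" where
  "mone = (\<lambda>i j. if i = j then gone else gzero)"
definition mmul :: "nat \<Rightarrow> 'a::comm_ring_1 gmat \<Rightarrow> 'a gmat \<Rightarrow> 'a gmat" where
  "mmul n A B = (\<lambda>i j. gsum n (\<lambda>k. gmul (A i k) (B k j)))"
fun mpow :: "nat \<Rightarrow> 'a::comm_ring_1 gmat \<Rightarrow> nat \<Rightarrow> 'a gmat" where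
  "mpow n B 0 = mone"
| "mpow n B (Suc k) = mmul n (mpow n B k) B"
definition mtr :: "nat \<Rightarrow> 'a::comm_ring_1 gmat \<Rightarrow> 'a grass" where
  "mtr n A = gsum n (\<lambda>i. A i i)"
definition madd :: "'a::comm_ring_1 gmat \<Rightarrow> 'a gmat \<Rightarrow> 'a gmat" where
  "madd A B = (\<lambda>i j. gadd (A i j) (B i j))"
definition melt :: "'a::comm_ring_1 grass \<Rightarrow> 'a gmat \<Rightarrow> 'a gmat" where
  "melt c A = (\<lambda>i j. gmul c (A i j))"
definition mscal :: "'a::comm_ring_1 \<Rightarrow> 'a gmat \<Rightarrow> 'a gmat" where
  "mscal c A = (\<lambda>i j. gscal c (A i j))"

definition is_zero_mat :: "nat \<Rightarrow> 'a::comm_ring_1 gmat \<Rightarrow> bool" where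
  "is_zero_mat n A \<longleftrightarrow> (\<forall>i<n. \<forall>j<n. A i j = gzero)"

end

theory Submission
  imports Defs
begin


definition ginv :: "nat set \<Rightarrow> nat set \<Rightarrow> nat" where
  "ginv S T = card {(i,j). i \<in> S \<and> j \<in> T \<and> j < i}"

lemma gsign_ginv: "gsign S T = (-1) ^ ginv S T"
  by (simp add: gsign_def ginv_def)

lemma ginv_fin: "finite S \<Longrightarrow> finite T \<Longrightarrow> finite {(i,j). i \<in> S \<and> j \<in> T \<and> j < i}"
  by (rule finite_subset[of _ "S \<times> T"]) auto

lemma ginv_Un1:
  assumes "finite A" "finite A'" "finite T" "A \<inter> A' = {}"
  shows "ginv (A \<union> A') T = ginv A T + ginv A' T"
proof -
  have "{(i,j). i \<in> A \<union> A' \<and> j \<in> T \<and> j < i} =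
        {(i,j). i \<in> A \<and> j \<in> T \<and> j < i} \<union> {(i,j). i \<in> A' \<and> j \<in> T \<and> j < i}" by auto
  moreover have "{(i,j). i \<in> A \<and> j \<in> T \<and> j < i} \<inter> {(i,j). i \<in> A' \<and> j \<in> T \<and> j < i} = {}"
    using assms(4) by auto
  ultimately show ?thesis unfolding ginv_def
    by (simp add: card_Un_disjoint ginv_fin assms)
qed

lemma ginv_Un2:
  assumes "finite A" "finite T" "finite T'" "T \<inter> T' = {}"
  shows "ginv A (T \<union> T') = ginv A T + ginv A T'"
proof -
  have "{(i,j). i \<in> A \<and> j \<in> T \<union> T' \<and> j < i} =
        {(i,j). i \<in> A \<and> j \<in> T \<and> j < i} \<union> {(i,j). i \<in> A \<and> j \<in> T' \<and> j < i}" by auto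
  moreover have "{(i,j). i \<in> A \<and> j \<in> T \<and> j < i} \<inter> {(i,j). i \<in> A \<and> j \<in> T' \<and> j < i} = {}"
    using assms(4) by auto
  ultimately show ?thesis unfolding ginv_def
    by (simp add: card_Un_disjoint ginv_fin assms)
qed

lemma ginv_swap:
  assumes "finite S" "finite T" "S \<inter> T = {}"
  shows "ginv S T + ginv T S = card S * card T"
proof -
  let ?A = "{(i,j). i \<in> S \<and> j \<in> T \<and> j < i}"
  let ?B = "{(i,j). i \<in> S \<and> j \<in> T \<and> i < j}"
  have sw: "prod.swap ` {(i,j). i \<in> T \<and> j \<in> S \<and> j < i} = ?B"
  proof (rule set_eqI)
    fix p :: "nat \<times> nat"
    show "p \<in> prod.swap ` {(i,j). i \<in> T \<and> j \<in> S \<and> j < i} \<longleftrightarrow> p \<in> ?B"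
      by (cases p) (simp add: image_iff, blast)
  qed
  have "ginv T S = card (prod.swap ` {(i,j). i \<in> T \<and> j \<in> S \<and> j < i})"
    unfolding ginv_def by (simp add: card_image)
  then have b: "ginv T S = card ?B" using sw by simp
  have un: "?A \<union> ?B = S \<times> T"
  proof (rule set_eqI)
    fix p :: "nat \<times> nat"
    obtain i j where p: "p = (i,j)" by (cases p)
    show "p \<in> ?A \<union> ?B \<longleftrightarrow> p \<in> S \<times> T"
    proof
      assume "p \<in> S \<times> T"
      then have "i \<in> S" "j \<in> T" using p by auto
      then have "i \<noteq> j" using assms(3) by blast
      then show "p \<in> ?A \<union> ?B" using \<open>i \<in> S\<close> \<open>j \<in> T\<close> p by (cases "j < i") auto
    qed (use p in auto)
  qed
  have di: "?A \<inter> ?B = {}" by auto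
  have fB: "finite ?B" by (rule finite_subset[of _ "S \<times> T"]) (auto simp: assms)
  have "card ?A + card ?B = card (?A \<union> ?B)"
    using card_Un_disjoint[OF ginv_fin[OF assms(1,2)] fB di] by simp
  also have "\<dots> = card S * card T" using un by (simp add: card_cartesian_product)
  finally show ?thesis using b by (simp add: ginv_def)
qed

lemma gsign_Un1: "finite A \<Longrightarrow> finite A' \<Longrightarrow> finite T \<Longrightarrow> A \<inter> A' = {} \<Longrightarrow>
  gsign (A \<union> A') T = (gsign A T * gsign A' T :: 'a::comm_ring_1)"
  by (simp add: gsign_ginv ginv_Un1 power_add)

lemma gsign_Un2: "finite A \<Longrightarrow> finite T \<Longrightarrow> finite T' \<Longrightarrow> T \<inter> T' = {} \<Longrightarrow>
  gsign A (T \<union> T') = (gsign A T * gsign A T' :: 'a::comm_ring_1)"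
  by (simp add: gsign_ginv ginv_Un2 power_add)

lemma gsign_cocycle:
  assumes "finite U" "R \<subseteq> S" "S \<subseteq> U"
  shows "(gsign S (U - S) * gsign R (S - R) :: 'a::comm_ring_1) = gsign R (U - R) * gsign (S - R) (U - S)"
proof -
  have fS: "finite S" using finite_subset[OF assms(3) assms(1)] .
  have fin: "finite S" "finite R" using fS finite_subset[OF assms(2) fS] by auto
  have fU: "finite (U - S)" "finite (S - R)" using assms(1) fin by auto
  have e1: "S = R \<union> (S - R)" using assms by auto
  have 1: "(gsign S (U - S) :: 'a) = gsign R (U - S) * gsign (S - R) (U - S)"
  proof -
    have "(gsign (R \<union> (S - R)) (U - S) :: 'a) = gsign R (U - S) * gsign (S - R) (U - S)"
      by (rule gsign_Un1) (use fin fU in auto)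
    then show ?thesis by (simp only: e1[symmetric])
  qed
  have e2: "U - R = (S - R) \<union> (U - S)" using assms by auto
  have d2: "(S - R) \<inter> (U - S) = {}" by auto
  have 2: "(gsign R (U - R) :: 'a) = gsign R (S - R) * gsign R (U - S)"
  proof -
    have "(gsign R ((S - R) \<union> (U - S)) :: 'a) = gsign R (S - R) * gsign R (U - S)"
      by (rule gsign_Un2) (use fin fU d2 in auto)
    then show ?thesis by (simp only: e2[symmetric])
  qed
  show ?thesis unfolding 1 2 by (simp only: mult_ac)
qed

lemma gmul_assoc: "gmul (gmul x y) z = gmul x (gmul y z)"
proof
  fix U
  show "gmul (gmul x y) z U = gmul x (gmul y z) U"
  proof (cases "finite U")
    case False thus ?thesis by (simp add: gmul_def)
  next
    case True
    have fS: "\<And>S. S \<in> Pow U \<Longrightarrow> finite S" using True finite_subset by auto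
    have "gmul (gmul x y) z U = (\<Sum>S\<in>Pow U. \<Sum>R\<in>Pow S.
            gsign S (U - S) * gsign R (S - R) * (x R * y (S - R) * z (U - S)))"
      using True fS by (simp add: gmul_def sum_distrib_left sum_distrib_right algebra_simps)
    also have "\<dots> = (\<Sum>S\<in>Pow U. \<Sum>R\<in>{R. R \<in> Pow U \<and> R \<subseteq> S}.
            gsign R (U - R) * gsign (S - R) (U - S) * (x R * y (S - R) * z (U - S)))"
    proof (rule sum.cong[OF refl])
      fix S assume S: "S \<in> Pow U"
      have "{R. R \<in> Pow U \<and> R \<subseteq> S} = Pow S" using S by auto
      then show "(\<Sum>R\<in>Pow S. gsign S (U - S) * gsign R (S - R) * (x R * y (S - R) * z (U - S))) =
        (\<Sum>R\<in>{R. R \<in> Pow U \<and> R \<subseteq> S}. gsign R (U - R) * gsign (S - R) (U - S) * (x R * y (S - R) * z (U - S)))"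
        using S True by (auto intro!: sum.cong simp: gsign_cocycle)
    qed
    also have "\<dots> = (\<Sum>R\<in>Pow U. \<Sum>S\<in>{S. S \<in> Pow U \<and> R \<subseteq> S}.
            gsign R (U - R) * gsign (S - R) (U - S) * (x R * y (S - R) * z (U - S)))"
      by (rule sum.swap_restrict) (simp_all add: True)
    also have "\<dots> = (\<Sum>R\<in>Pow U. \<Sum>Q\<in>Pow (U - R).
            gsign R (U - R) * gsign Q (U - R - Q) * (x R * y Q * z (U - R - Q)))"
    proof (rule sum.cong[OF refl])
      fix R assume R: "R \<in> Pow U"
      have e: "\<And>a. R \<subseteq> a \<Longrightarrow> U - R - (a - R) = U - a" by auto
      show "(\<Sum>S\<in>{S. S \<in> Pow U \<and> R \<subseteq> S}. gsign R (U - R) * gsign (S - R) (U - S) * (x R * y (S - R) * z (U - S))) =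
            (\<Sum>Q\<in>Pow (U - R). gsign R (U - R) * gsign Q (U - R - Q) * (x R * y Q * z (U - R - Q)))"
        by (rule sum.reindex_bij_witness[where j = "\<lambda>S. S - R" and i = "\<lambda>Q. R \<union> Q"])
           (use R in \<open>auto simp: Diff_Un Un_Diff double_diff e\<close>)
    qed
    also have "\<dots> = gmul x (gmul y z) U"
      using True fS by (simp add: gmul_def sum_distrib_left sum_distrib_right algebra_simps)
    finally show ?thesis .
  qed
qed


lemma gsign_empty1[simp]: "gsign {} T = 1" by (simp add: gsign_def)
lemma gsign_empty2[simp]: "gsign S {} = 1" by (simp add: gsign_def)

definition gtr :: "'a::comm_ring_1 grass \<Rightarrow> 'a grass" where
  "gtr x = (\<lambda>U. if finite U then x U else 0)"

definition gfs :: "'a::comm_ring_1 grass \<Rightarrow> bool" where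
  "gfs x \<longleftrightarrow> (\<forall>U. infinite U \<longrightarrow> x U = 0)"

lemma gmul_gone_left: "gmul gone x = gtr x"
proof
  fix U show "gmul gone x U = gtr x U"
  proof (cases "finite U")
    case True
    have "gmul gone x U = (\<Sum>S\<in>Pow U. gsign S (U - S) * gone S * x (U - S))"
      using True by (simp add: gmul_def)
    also have "\<dots> = (\<Sum>S\<in>Pow U. if S = {} then x U else 0)"
      by (rule sum.cong) (auto simp: gone_def)
    also have "\<dots> = x U" using True by (simp add: sum.delta)
    finally show ?thesis using True by (simp add: gtr_def)
  qed (simp add: gmul_def gtr_def)
qed

lemma gmul_gone_right: "gmul x gone = gtr x"
proof
  fix U show "gmul x gone U = gtr x U"
  proof (cases "finite U")
    case True
    have "gmul x gone U = (\<Sum>S\<in>Pow U. gsign S (U - S) * x S * gone (U - S))"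
      using True by (simp add: gmul_def)
    also have "\<dots> = (\<Sum>S\<in>Pow U. if S = U then x U else 0)"
      by (rule sum.cong) (auto simp: gone_def)
    also have "\<dots> = x U" using True by (simp add: sum.delta)
    finally show ?thesis using True by (simp add: gtr_def)
  qed (simp add: gmul_def gtr_def)
qed

lemma gtr_id: "gfs x \<Longrightarrow> gtr x = x"
  by (auto simp: gtr_def gfs_def fun_eq_iff)

lemma gmul_gtr1: "gmul (gtr x) y = gmul x y"
  unfolding gmul_def gtr_def fun_eq_iff
  by (auto intro!: sum.cong dest: finite_subset)
lemma gmul_gtr2: "gmul x (gtr y) = gmul x y"
  unfolding gmul_def gtr_def fun_eq_iff
  by (auto intro!: sum.cong)

lemma gmul_distL: "gmul (gadd x y) z = gadd (gmul x z) (gmul y z)"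
  by (auto simp: gmul_def gadd_def fun_eq_iff sum.distrib algebra_simps)
lemma gmul_distR: "gmul z (gadd x y) = gadd (gmul z x) (gmul z y)"
  by (auto simp: gmul_def gadd_def fun_eq_iff sum.distrib algebra_simps)
lemma gmul_scalL: "gmul (gscal c x) y = gscal c (gmul x y)"
  by (auto simp: gmul_def gscal_def fun_eq_iff sum_distrib_left algebra_simps)

lemma gfs_gmul[simp]: "gfs (gmul x y)" by (simp add: gfs_def gmul_def)
lemma gfs_gadd[simp]: "gfs x \<Longrightarrow> gfs y \<Longrightarrow> gfs (gadd x y)" by (simp add: gfs_def gadd_def)
lemma gfs_gsub[simp]: "gfs x \<Longrightarrow> gfs y \<Longrightarrow> gfs (gsub x y)" by (simp add: gfs_def gsub_def)
lemma gfs_gscal[simp]: "gfs x \<Longrightarrow> gfs (gscal c x)" by (simp add: gfs_def gscal_def)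
lemma gfs_gone[simp]: "gfs gone" by (simp add: gfs_def gone_def)
lemma gfs_gzero[simp]: "gfs gzero" by (simp add: gfs_def gzero_def)
lemma gfs_gtr[simp]: "gfs (gtr x)" by (simp add: gfs_def gtr_def)
lemma gfs_gsum[simp]: "(\<And>k. k < n \<Longrightarrow> gfs (f k)) \<Longrightarrow> gfs (gsum n f)"
  by (simp add: gfs_def gsum_def)
lemma gfs_mone[simp]: "gfs (mone i j)" by (simp add: mone_def)
lemma gfs_mpow[simp]: "gfs (mpow n B k i j)"
  by (cases k) (simp_all add: mmul_def)

typedef (overloaded) 'a G = "{x :: 'a::comm_ring_1 grass. gfs x}" morphisms RG AG
  by (rule exI[of _ gzero]) simp

lemma RG_gfs[simp]: "gfs (RG x)" using RG[of x] by simp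
lemma RG_AG[simp]: "gfs x \<Longrightarrow> RG (AG x) = x" by (simp add: AG_inverse)
lemma G_eqI: "RG x = RG y \<Longrightarrow> x = y" by (simp add: RG_inject)

instantiation G :: (comm_ring_1) ring_1
begin
definition "0 = AG gzero"
definition "1 = AG gone"
definition "x + y = AG (gadd (RG x) (RG y))"
definition "- x = AG (gscal (-1) (RG x))"
definition "x - y = AG (gsub (RG x) (RG y))"
definition "x * y = AG (gmul (RG x) (RG y))"
lemma RG_zero[simp]: "RG (0::'a G) = gzero" by (simp add: zero_G_def)
lemma RG_one[simp]: "RG (1::'a G) = gone" by (simp add: one_G_def)
lemma RG_plus[simp]: "RG (x + y) = gadd (RG x) (RG y)" by (simp add: plus_G_def)
lemma RG_uminus[simp]: "RG (- x) = gscal (-1) (RG x)" by (simp add: uminus_G_def)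
lemma RG_minus[simp]: "RG (x - y) = gsub (RG x) (RG y)" by (simp add: minus_G_def)
lemma RG_times[simp]: "RG (x * y) = gmul (RG x) (RG y)" by (simp add: times_G_def)
instance
proof
  fix a b c :: "'a G"
  show "a * b * c = a * (b * c)" by (rule G_eqI) (simp add: gmul_assoc)
  show "1 * a = a" by (rule G_eqI) (simp add: gmul_gone_left gtr_id)
  show "a * 1 = a" by (rule G_eqI) (simp add: gmul_gone_right gtr_id)
  show "(a + b) * c = a * c + b * c" by (rule G_eqI) (simp add: gmul_distL)
  show "a * (b + c) = a * b + a * c" by (rule G_eqI) (simp add: gmul_distR)
  show "a + b + c = a + (b + c)" by (rule G_eqI) (simp add: gadd_def algebra_simps)
  show "a + b = b + a" by (rule G_eqI) (simp add: gadd_def algebra_simps)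
  show "0 + a = a" by (rule G_eqI) (simp add: gadd_def gzero_def)
  show "- a + a = 0" by (rule G_eqI) (simp add: gadd_def gzero_def gscal_def)
  show "a - b = a + - b" by (rule G_eqI) (simp add: gadd_def gsub_def gscal_def)
  show "(0::'a G) \<noteq> 1"
  proof
    assume "(0::'a G) = 1"
    then have "RG (0::'a G) {} = RG (1::'a G) {}" by simp
    then show False by (simp add: gzero_def gone_def)
  qed
qed
end

definition gE :: "'a::comm_ring_1 grass \<Rightarrow> 'a G" where "gE x = AG (gtr x)"
definition sc :: "'a::comm_ring_1 \<Rightarrow> 'a G" where "sc c = AG (gscal c gone)"

lemma RG_gE[simp]: "RG (gE x) = gtr x" by (simp add: gE_def)
lemma RG_sc[simp]: "RG (sc c) = gscal c gone" by (simp add: sc_def)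

lemma gE_mul[simp]: "gE (gmul x y) = gE x * gE y"
  by (rule G_eqI) (simp add: gmul_gtr1 gmul_gtr2 gtr_id)
lemma gE_add[simp]: "gE (gadd x y) = gE x + gE y"
  by (rule G_eqI) (simp add: gtr_def gadd_def fun_eq_iff)
lemma gE_sub[simp]: "gE (gsub x y) = gE x - gE y"
  by (rule G_eqI) (simp add: gtr_def gsub_def fun_eq_iff)
lemma gE_scal[simp]: "gE (gscal c x) = sc c * gE x"
  apply (rule G_eqI)
  apply (simp add: gmul_scalL gmul_gone_left)
  apply (simp add: gtr_def gscal_def fun_eq_iff)
  done
lemma gE_one[simp]: "gE gone = 1"
  by (rule G_eqI) (simp add: gtr_id)
lemma gE_zero[simp]: "gE gzero = 0"
  by (rule G_eqI) (simp add: gtr_id)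
lemma gE_gsum[simp]: "gE (gsum n f) = (\<Sum>k<n. gE (f k))"
proof (induction n)
  case 0
  have "gsum 0 f = gzero" by (simp add: gsum_def gzero_def fun_eq_iff)
  then show ?case by simp
next
  case (Suc n)
  have "gsum (Suc n) f = gadd (gsum n f) (f n)" by (simp add: gsum_def gadd_def fun_eq_iff)
  then show ?case using Suc by simp
qed
lemma gE_mone[simp]: "gE (mone i j) = (if i = j then 1 else 0)"
  by (simp add: mone_def)
lemma sc_m1[simp]: "sc (-1) = (-1 :: 'a::comm_ring_1 G)"
  by (rule G_eqI) simp
lemma two_r: "(2::'r::ring_1) * x = x + x"
proof - have "(2::'r) = 1+1" by simp then show ?thesis by (simp only: distrib_right mult_1_left) qed
lemma three_r: "(3::'r::ring_1) * x = x + x + x"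
proof - have "(3::'r) = 1+1+1" by simp then show ?thesis by (simp only: distrib_right mult_1_left) qed
lemma sc_2[simp]: "sc 2 = (2 :: 'a::comm_ring_1 G)"
proof -
  have "sc 2 = (1 + 1 :: 'a G)"
    by (rule G_eqI) (simp only: RG_sc RG_plus RG_one gscal_def gadd_def two_r)
  then show ?thesis by simp
qed
lemma sc_3[simp]: "sc 3 = (3 :: 'a::comm_ring_1 G)"
proof -
  have "sc 3 = (1 + 1 + 1 :: 'a G)"
    by (rule G_eqI) (simp only: RG_sc RG_plus RG_one gscal_def gadd_def three_r)
  then show ?thesis by simp
qed

lemma gE_inj: "gfs e \<Longrightarrow> gE e = 0 \<Longrightarrow> e = gzero"
proof -
  assume f: "gfs e" and z: "gE e = 0"
  then have "RG (gE e) = gzero" by simp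
  then show ?thesis using f by (simp add: gtr_id)
qed

lemma neg1_pow_odd_sum: "odd (a + b) \<Longrightarrow> ((-1::'a::comm_ring_1) ^ a) = - ((-1) ^ b)"
  by (cases "even a") auto

lemma gmul_anti:
  assumes x: "is_odd_grass x" and y: "is_odd_grass y"
  shows "gmul x y = gscal (-1) (gmul y x)"
proof
  fix U show "gmul x y U = gscal (-1) (gmul y x) U"
  proof (cases "finite U")
    case False thus ?thesis by (simp add: gmul_def gscal_def)
  next
    case True
    have "gmul y x U = (\<Sum>T\<in>Pow U. gsign T (U - T) * y T * x (U - T))"
      using True by (simp add: gmul_def)
    also have "\<dots> = (\<Sum>S\<in>Pow U. gsign (U - S) (U - (U - S)) * y (U - S) * x (U - (U - S)))"
      by (rule sum.reindex_bij_witness[where i = "\<lambda>S. U - S" and j = "\<lambda>S. U - S"])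
         (auto simp: Diff_Diff_Int Int_absorb1)
    also have "\<dots> = (\<Sum>S\<in>Pow U. gsign (U - S) S * y (U - S) * x S)"
      by (rule sum.cong) (auto simp: double_diff)
    finally have yx: "gmul y x U = \<dots>" .
    have "gmul x y U = (\<Sum>S\<in>Pow U. - (gsign (U - S) S * y (U - S) * x S))"
      unfolding gmul_def using True
    proof (simp, intro sum.cong refl)
      fix S assume S: "S \<in> Pow U"
      show "gsign S (U - S) * x S * y (U - S) = - (gsign (U - S) S * y (U - S) * x S)"
      proof (cases "x S = 0 \<or> y (U - S) = 0")
        case True thus ?thesis by auto
      next
        case False
        then have o: "odd (card S)" "odd (card (U - S))"
          using x y by (auto simp: is_odd_grass_def)
        have fS: "finite S" using S True finite_subset by auto
        have "ginv S (U - S) + ginv (U - S) S = card S * card (U - S)"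
          by (rule ginv_swap) (use fS True in auto)
        then have "odd (ginv S (U - S) + ginv (U - S) S)" using o by simp
        then have "(gsign S (U - S) :: 'a) = - gsign (U - S) S"
          unfolding gsign_ginv by (rule neg1_pow_odd_sum)
        then show ?thesis by (simp add: algebra_simps)
      qed
    qed
    then show ?thesis using yx by (simp add: gscal_def sum_negf)
  qed
qed

lemma gmul_sq:
  fixes x :: "'a::field_char_0 grass"
  assumes x: "is_odd_grass x"
  shows "gmul x x = gzero"
proof
  fix U
  let ?v = "gmul x x U"
  have h: "?v = gscal (-1) (gmul x x) U" using fun_cong[OF gmul_anti[OF x x], of U] .
  then have h': "?v = -1 * ?v" unfolding gscal_def .
  have "2 * ?v = ?v + ?v" by (rule mult_2)
  also have "\<dots> = ?v + -1 * ?v" using h' by (rule arg_cong[where f="\<lambda>z. ?v + z"])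
  also have "\<dots> = 0" by simp
  finally have "2 * ?v = 0" .
  then show "gmul x x U = gzero U" by (simp add: gzero_def)
qed

lemma gE_anti:
  assumes "is_odd_grass x" "is_odd_grass y"
  shows "gE x * gE y = - (gE y * gE x)"
proof -
  have "gE x * gE y = gE (gmul x y)" by simp
  also have "\<dots> = gE (gscal (-1) (gmul y x))" using gmul_anti[OF assms] by (rule arg_cong)
  also have "\<dots> = - (gE y * gE x)" by simp
  finally show ?thesis .
qed

lemma gE_sq:
  assumes "is_odd_grass (x :: 'a::field_char_0 grass)"
  shows "gE x * gE x = 0"
proof -
  have "gE x * gE x = gE (gmul x x)" by simp
  also have "\<dots> = gE gzero" using gmul_sq[OF assms] by (rule arg_cong)
  finally show ?thesis by simp
qed


fun rp :: "nat \<Rightarrow> (nat \<Rightarrow> nat \<Rightarrow> 'r::ring_1) \<Rightarrow> nat \<Rightarrow> nat \<Rightarrow> nat \<Rightarrow> 'r" where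
  "rp n M 0 i j = (if i = j then 1 else 0)"
| "rp n M (Suc k) i j = (\<Sum>l<n. rp n M k i l * M l j)"
lemma rpN: "rp n M (numeral k) i j = (\<Sum>l<n. rp n M (pred_numeral k) i l * M l j)"
  by (simp add: numeral_eq_Suc)
lemma rp2: "rp n M 2 i j = (\<Sum>l<n. rp n M 1 i l * M l j)"
  using rp.simps(2)[of n M 1 i j] by (simp only: Suc_1)
lemma rp3: "rp n M 3 i j = (\<Sum>l<n. rp n M 2 i l * M l j)"
proof - have "Suc 2 = 3" by simp then show ?thesis using rp.simps(2)[of n M 2 i j] by (simp only:) qed
lemma rp4: "rp n M 4 i j = (\<Sum>l<n. rp n M 3 i l * M l j)"
proof - have "Suc 3 = 4" by simp then show ?thesis using rp.simps(2)[of n M 3 i j] by (simp only:) qed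
lemma rp5: "rp n M 5 i j = (\<Sum>l<n. rp n M 4 i l * M l j)"
proof - have "Suc 4 = 5" by simp then show ?thesis using rp.simps(2)[of n M 4 i j] by (simp only:) qed
lemma sum2: "sum f {..<2::nat} = f 0 + f 1" by (simp add: numeral_2_eq_2)
lemma sum3: "sum f {..<3::nat} = f 0 + f 1 + f 2" by (simp add: numeral_3_eq_3 numeral_2_eq_2 add.assoc)
lemma less2: "(i::nat) < 2 \<longleftrightarrow> i = 0 \<or> i = 1" by auto
lemma less3: "(i::nat) < 3 \<longleftrightarrow> i = 0 \<or> i = 1 \<or> i = 2" by auto
lemma abs2:
  fixes M :: "nat \<Rightarrow> nat \<Rightarrow> 'r::ring_1"
  assumes ac: "\<And>i j k l. i<2 \<Longrightarrow> j<2 \<Longrightarrow> k<2 \<Longrightarrow> l<2 \<Longrightarrow> M i j * M k l = - (M k l * M i j)"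
  and sq: "\<And>i j. i<2 \<Longrightarrow> j<2 \<Longrightarrow> M i j * M i j = 0"
  and ij: "i < 2" "j < 2"
  shows "((\<Sum>l<2. M l l) * (\<Sum>l<2. rp 2 M 2 l l) - (\<Sum>l<2. rp 2 M 3 l l)) * (if i = j then 1 else 0) + (-1 * ((\<Sum>l<2. rp 2 M 2 l l) * M i j) + (-1 * ((\<Sum>l<2. M l l) * rp 2 M 2 i j) + 2 * rp 2 M 3 i j)) = 0"
proof -
  have r0_0: "M 0 0 * M 0 0 = 0" "M 0 0 * (M 0 0 * z) = 0" for z using sq[of 0 0] by (simp_all add: mult.assoc[symmetric])
  have r0_1: "M 0 1 * M 0 0 = - (M 0 0 * M 0 1)" "M 0 1 * (M 0 0 * z) = - (M 0 0 * (M 0 1 * z))" for z using ac[of 0 1 0 0] by (simp_all add: mult.assoc[symmetric])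
  have r1_1: "M 0 1 * M 0 1 = 0" "M 0 1 * (M 0 1 * z) = 0" for z using sq[of 0 1] by (simp_all add: mult.assoc[symmetric])
  have r0_2: "M 1 0 * M 0 0 = - (M 0 0 * M 1 0)" "M 1 0 * (M 0 0 * z) = - (M 0 0 * (M 1 0 * z))" for z using ac[of 1 0 0 0] by (simp_all add: mult.assoc[symmetric])
  have r1_2: "M 1 0 * M 0 1 = - (M 0 1 * M 1 0)" "M 1 0 * (M 0 1 * z) = - (M 0 1 * (M 1 0 * z))" for z using ac[of 1 0 0 1] by (simp_all add: mult.assoc[symmetric])
  have r2_2: "M 1 0 * M 1 0 = 0" "M 1 0 * (M 1 0 * z) = 0" for z using sq[of 1 0] by (simp_all add: mult.assoc[symmetric])
  have r0_3: "M 1 1 * M 0 0 = - (M 0 0 * M 1 1)" "M 1 1 * (M 0 0 * z) = - (M 0 0 * (M 1 1 * z))" for z using ac[of 1 1 0 0] by (simp_all add: mult.assoc[symmetric])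
  have r1_3: "M 1 1 * M 0 1 = - (M 0 1 * M 1 1)" "M 1 1 * (M 0 1 * z) = - (M 0 1 * (M 1 1 * z))" for z using ac[of 1 1 0 1] by (simp_all add: mult.assoc[symmetric])
  have r2_3: "M 1 1 * M 1 0 = - (M 1 0 * M 1 1)" "M 1 1 * (M 1 0 * z) = - (M 1 0 * (M 1 1 * z))" for z using ac[of 1 1 1 0] by (simp_all add: mult.assoc[symmetric])
  have r3_3: "M 1 1 * M 1 1 = 0" "M 1 1 * (M 1 1 * z) = 0" for z using sq[of 1 1] by (simp_all add: mult.assoc[symmetric])
  note R = r0_0 r0_1 r1_1 r0_2 r1_2 r2_2 r0_3 r1_3 r2_3 r3_3
  have P1: "rp 2 M 1 0 0 = M 0 0"
    "rp 2 M 1 0 1 = M 0 1"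
    "rp 2 M 1 1 0 = M 1 0"
    "rp 2 M 1 1 1 = M 1 1"
    by (simp_all add: sum2)
  have P2: "rp 2 M 2 0 0 = (M 0 1 * M 1 0)"
    "rp 2 M 2 0 1 = (M 0 0 * M 0 1) + (M 0 1 * M 1 1)"
    "rp 2 M 2 1 0 = (- (M 0 0 * M 1 0)) + (- (M 1 0 * M 1 1))"
    "rp 2 M 2 1 1 = (- (M 0 1 * M 1 0))"
    by (simp_all only: rp2 sum2 P1) (simp_all add: R algebra_simps del: One_nat_def)
  have P3: "rp 2 M 3 0 0 = (M 0 0 * (M 0 1 * M 1 0)) + (M 0 0 * (M 0 1 * M 1 0)) + (- (M 0 1 * (M 1 0 * M 1 1)))"
    "rp 2 M 3 0 1 = (M 0 0 * (M 0 1 * M 1 1))"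
    "rp 2 M 3 1 0 = (- (M 0 0 * (M 1 0 * M 1 1)))"
    "rp 2 M 3 1 1 = (M 0 0 * (M 0 1 * M 1 0)) + (- (M 0 1 * (M 1 0 * M 1 1))) + (- (M 0 1 * (M 1 0 * M 1 1)))"
    by (simp_all only: rp3 sum2 P2) (simp_all add: R algebra_simps del: One_nat_def)
  have t2: "(\<Sum>l<2. rp 2 M 2 l l) = 0" by (simp add: sum2 P2 R algebra_simps del: One_nat_def)
  show ?thesis using ij unfolding t2 less2 by (elim disjE) (simp_all add: sum2 P1 P2 P3 R algebra_simps two_r del: One_nat_def)
qed
lemma abs3:
  fixes M :: "nat \<Rightarrow> nat \<Rightarrow> 'r::ring_1"
  assumes ac: "\<And>i j k l. i<3 \<Longrightarrow> j<3 \<Longrightarrow> k<3 \<Longrightarrow> l<3 \<Longrightarrow> M i j * M k l = - (M k l * M i j)"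
  and sq: "\<And>i j. i<3 \<Longrightarrow> j<3 \<Longrightarrow> M i j * M i j = 0"
  and ij: "i < 3" "j < 3"
  shows "(c1 * ((\<Sum>l<3. rp 3 M 2 l l) * (\<Sum>l<3. rp 3 M 2 l l) * (\<Sum>l<3. M l l)) + ((\<Sum>l<3. rp 3 M 3 l l) * (\<Sum>l<3. rp 3 M 2 l l) + (c2 * ((\<Sum>l<3. rp 3 M 4 l l) * (\<Sum>l<3. M l l)) + -1 * (\<Sum>l<3. rp 3 M 5 l l)))) * (if i = j then 1 else 0) + ((c3 * ((\<Sum>l<3. rp 3 M 2 l l) * (\<Sum>l<3. rp 3 M 2 l l)) + c4 * (\<Sum>l<3. rp 3 M 4 l l)) * M i j + (((\<Sum>l<3. rp 3 M 2 l l) * (\<Sum>l<3. M l l) - (\<Sum>l<3. rp 3 M 3 l l)) * rp 3 M 2 i j + (c5 * ((\<Sum>l<3. rp 3 M 2 l l) * rp 3 M 3 i j) + (-1 * ((\<Sum>l<3. M l l) * rp 3 M 4 i j) + 3 * rp 3 M 5 i j)))) = 0"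
proof -
  have r0_0: "M 0 0 * M 0 0 = 0" "M 0 0 * (M 0 0 * z) = 0" for z using sq[of 0 0] by (simp_all add: mult.assoc[symmetric])
  have r0_1: "M 0 1 * M 0 0 = - (M 0 0 * M 0 1)" "M 0 1 * (M 0 0 * z) = - (M 0 0 * (M 0 1 * z))" for z using ac[of 0 1 0 0] by (simp_all add: mult.assoc[symmetric])
  have r1_1: "M 0 1 * M 0 1 = 0" "M 0 1 * (M 0 1 * z) = 0" for z using sq[of 0 1] by (simp_all add: mult.assoc[symmetric])
  have r0_2: "M 0 2 * M 0 0 = - (M 0 0 * M 0 2)" "M 0 2 * (M 0 0 * z) = - (M 0 0 * (M 0 2 * z))" for z using ac[of 0 2 0 0] by (simp_all add: mult.assoc[symmetric])
  have r1_2: "M 0 2 * M 0 1 = - (M 0 1 * M 0 2)" "M 0 2 * (M 0 1 * z) = - (M 0 1 * (M 0 2 * z))" for z using ac[of 0 2 0 1] by (simp_all add: mult.assoc[symmetric])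
  have r2_2: "M 0 2 * M 0 2 = 0" "M 0 2 * (M 0 2 * z) = 0" for z using sq[of 0 2] by (simp_all add: mult.assoc[symmetric])
  have r0_3: "M 1 0 * M 0 0 = - (M 0 0 * M 1 0)" "M 1 0 * (M 0 0 * z) = - (M 0 0 * (M 1 0 * z))" for z using ac[of 1 0 0 0] by (simp_all add: mult.assoc[symmetric])
  have r1_3: "M 1 0 * M 0 1 = - (M 0 1 * M 1 0)" "M 1 0 * (M 0 1 * z) = - (M 0 1 * (M 1 0 * z))" for z using ac[of 1 0 0 1] by (simp_all add: mult.assoc[symmetric])
  have r2_3: "M 1 0 * M 0 2 = - (M 0 2 * M 1 0)" "M 1 0 * (M 0 2 * z) = - (M 0 2 * (M 1 0 * z))" for z using ac[of 1 0 0 2] by (simp_all add: mult.assoc[symmetric])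
  have r3_3: "M 1 0 * M 1 0 = 0" "M 1 0 * (M 1 0 * z) = 0" for z using sq[of 1 0] by (simp_all add: mult.assoc[symmetric])
  have r0_4: "M 1 1 * M 0 0 = - (M 0 0 * M 1 1)" "M 1 1 * (M 0 0 * z) = - (M 0 0 * (M 1 1 * z))" for z using ac[of 1 1 0 0] by (simp_all add: mult.assoc[symmetric])
  have r1_4: "M 1 1 * M 0 1 = - (M 0 1 * M 1 1)" "M 1 1 * (M 0 1 * z) = - (M 0 1 * (M 1 1 * z))" for z using ac[of 1 1 0 1] by (simp_all add: mult.assoc[symmetric])
  have r2_4: "M 1 1 * M 0 2 = - (M 0 2 * M 1 1)" "M 1 1 * (M 0 2 * z) = - (M 0 2 * (M 1 1 * z))" for z using ac[of 1 1 0 2] by (simp_all add: mult.assoc[symmetric])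
  have r3_4: "M 1 1 * M 1 0 = - (M 1 0 * M 1 1)" "M 1 1 * (M 1 0 * z) = - (M 1 0 * (M 1 1 * z))" for z using ac[of 1 1 1 0] by (simp_all add: mult.assoc[symmetric])
  have r4_4: "M 1 1 * M 1 1 = 0" "M 1 1 * (M 1 1 * z) = 0" for z using sq[of 1 1] by (simp_all add: mult.assoc[symmetric])
  have r0_5: "M 1 2 * M 0 0 = - (M 0 0 * M 1 2)" "M 1 2 * (M 0 0 * z) = - (M 0 0 * (M 1 2 * z))" for z using ac[of 1 2 0 0] by (simp_all add: mult.assoc[symmetric])
  have r1_5: "M 1 2 * M 0 1 = - (M 0 1 * M 1 2)" "M 1 2 * (M 0 1 * z) = - (M 0 1 * (M 1 2 * z))" for z using ac[of 1 2 0 1] by (simp_all add: mult.assoc[symmetric])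
  have r2_5: "M 1 2 * M 0 2 = - (M 0 2 * M 1 2)" "M 1 2 * (M 0 2 * z) = - (M 0 2 * (M 1 2 * z))" for z using ac[of 1 2 0 2] by (simp_all add: mult.assoc[symmetric])
  have r3_5: "M 1 2 * M 1 0 = - (M 1 0 * M 1 2)" "M 1 2 * (M 1 0 * z) = - (M 1 0 * (M 1 2 * z))" for z using ac[of 1 2 1 0] by (simp_all add: mult.assoc[symmetric])
  have r4_5: "M 1 2 * M 1 1 = - (M 1 1 * M 1 2)" "M 1 2 * (M 1 1 * z) = - (M 1 1 * (M 1 2 * z))" for z using ac[of 1 2 1 1] by (simp_all add: mult.assoc[symmetric])
  have r5_5: "M 1 2 * M 1 2 = 0" "M 1 2 * (M 1 2 * z) = 0" for z using sq[of 1 2] by (simp_all add: mult.assoc[symmetric])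
  have r0_6: "M 2 0 * M 0 0 = - (M 0 0 * M 2 0)" "M 2 0 * (M 0 0 * z) = - (M 0 0 * (M 2 0 * z))" for z using ac[of 2 0 0 0] by (simp_all add: mult.assoc[symmetric])
  have r1_6: "M 2 0 * M 0 1 = - (M 0 1 * M 2 0)" "M 2 0 * (M 0 1 * z) = - (M 0 1 * (M 2 0 * z))" for z using ac[of 2 0 0 1] by (simp_all add: mult.assoc[symmetric])
  have r2_6: "M 2 0 * M 0 2 = - (M 0 2 * M 2 0)" "M 2 0 * (M 0 2 * z) = - (M 0 2 * (M 2 0 * z))" for z using ac[of 2 0 0 2] by (simp_all add: mult.assoc[symmetric])
  have r3_6: "M 2 0 * M 1 0 = - (M 1 0 * M 2 0)" "M 2 0 * (M 1 0 * z) = - (M 1 0 * (M 2 0 * z))" for z using ac[of 2 0 1 0] by (simp_all add: mult.assoc[symmetric])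
  have r4_6: "M 2 0 * M 1 1 = - (M 1 1 * M 2 0)" "M 2 0 * (M 1 1 * z) = - (M 1 1 * (M 2 0 * z))" for z using ac[of 2 0 1 1] by (simp_all add: mult.assoc[symmetric])
  have r5_6: "M 2 0 * M 1 2 = - (M 1 2 * M 2 0)" "M 2 0 * (M 1 2 * z) = - (M 1 2 * (M 2 0 * z))" for z using ac[of 2 0 1 2] by (simp_all add: mult.assoc[symmetric])
  have r6_6: "M 2 0 * M 2 0 = 0" "M 2 0 * (M 2 0 * z) = 0" for z using sq[of 2 0] by (simp_all add: mult.assoc[symmetric])
  have r0_7: "M 2 1 * M 0 0 = - (M 0 0 * M 2 1)" "M 2 1 * (M 0 0 * z) = - (M 0 0 * (M 2 1 * z))" for z using ac[of 2 1 0 0] by (simp_all add: mult.assoc[symmetric])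
  have r1_7: "M 2 1 * M 0 1 = - (M 0 1 * M 2 1)" "M 2 1 * (M 0 1 * z) = - (M 0 1 * (M 2 1 * z))" for z using ac[of 2 1 0 1] by (simp_all add: mult.assoc[symmetric])
  have r2_7: "M 2 1 * M 0 2 = - (M 0 2 * M 2 1)" "M 2 1 * (M 0 2 * z) = - (M 0 2 * (M 2 1 * z))" for z using ac[of 2 1 0 2] by (simp_all add: mult.assoc[symmetric])
  have r3_7: "M 2 1 * M 1 0 = - (M 1 0 * M 2 1)" "M 2 1 * (M 1 0 * z) = - (M 1 0 * (M 2 1 * z))" for z using ac[of 2 1 1 0] by (simp_all add: mult.assoc[symmetric])
  have r4_7: "M 2 1 * M 1 1 = - (M 1 1 * M 2 1)" "M 2 1 * (M 1 1 * z) = - (M 1 1 * (M 2 1 * z))" for z using ac[of 2 1 1 1] by (simp_all add: mult.assoc[symmetric])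
  have r5_7: "M 2 1 * M 1 2 = - (M 1 2 * M 2 1)" "M 2 1 * (M 1 2 * z) = - (M 1 2 * (M 2 1 * z))" for z using ac[of 2 1 1 2] by (simp_all add: mult.assoc[symmetric])
  have r6_7: "M 2 1 * M 2 0 = - (M 2 0 * M 2 1)" "M 2 1 * (M 2 0 * z) = - (M 2 0 * (M 2 1 * z))" for z using ac[of 2 1 2 0] by (simp_all add: mult.assoc[symmetric])
  have r7_7: "M 2 1 * M 2 1 = 0" "M 2 1 * (M 2 1 * z) = 0" for z using sq[of 2 1] by (simp_all add: mult.assoc[symmetric])
  have r0_8: "M 2 2 * M 0 0 = - (M 0 0 * M 2 2)" "M 2 2 * (M 0 0 * z) = - (M 0 0 * (M 2 2 * z))" for z using ac[of 2 2 0 0] by (simp_all add: mult.assoc[symmetric])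
  have r1_8: "M 2 2 * M 0 1 = - (M 0 1 * M 2 2)" "M 2 2 * (M 0 1 * z) = - (M 0 1 * (M 2 2 * z))" for z using ac[of 2 2 0 1] by (simp_all add: mult.assoc[symmetric])
  have r2_8: "M 2 2 * M 0 2 = - (M 0 2 * M 2 2)" "M 2 2 * (M 0 2 * z) = - (M 0 2 * (M 2 2 * z))" for z using ac[of 2 2 0 2] by (simp_all add: mult.assoc[symmetric])
  have r3_8: "M 2 2 * M 1 0 = - (M 1 0 * M 2 2)" "M 2 2 * (M 1 0 * z) = - (M 1 0 * (M 2 2 * z))" for z using ac[of 2 2 1 0] by (simp_all add: mult.assoc[symmetric])
  have r4_8: "M 2 2 * M 1 1 = - (M 1 1 * M 2 2)" "M 2 2 * (M 1 1 * z) = - (M 1 1 * (M 2 2 * z))" for z using ac[of 2 2 1 1] by (simp_all add: mult.assoc[symmetric])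
  have r5_8: "M 2 2 * M 1 2 = - (M 1 2 * M 2 2)" "M 2 2 * (M 1 2 * z) = - (M 1 2 * (M 2 2 * z))" for z using ac[of 2 2 1 2] by (simp_all add: mult.assoc[symmetric])
  have r6_8: "M 2 2 * M 2 0 = - (M 2 0 * M 2 2)" "M 2 2 * (M 2 0 * z) = - (M 2 0 * (M 2 2 * z))" for z using ac[of 2 2 2 0] by (simp_all add: mult.assoc[symmetric])
  have r7_8: "M 2 2 * M 2 1 = - (M 2 1 * M 2 2)" "M 2 2 * (M 2 1 * z) = - (M 2 1 * (M 2 2 * z))" for z using ac[of 2 2 2 1] by (simp_all add: mult.assoc[symmetric])
  have r8_8: "M 2 2 * M 2 2 = 0" "M 2 2 * (M 2 2 * z) = 0" for z using sq[of 2 2] by (simp_all add: mult.assoc[symmetric])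
  note R = r0_0 r0_1 r1_1 r0_2 r1_2 r2_2 r0_3 r1_3 r2_3 r3_3 r0_4 r1_4 r2_4 r3_4 r4_4 r0_5 r1_5 r2_5 r3_5 r4_5 r5_5 r0_6 r1_6 r2_6 r3_6 r4_6 r5_6 r6_6 r0_7 r1_7 r2_7 r3_7 r4_7 r5_7 r6_7 r7_7 r0_8 r1_8 r2_8 r3_8 r4_8 r5_8 r6_8 r7_8 r8_8
  have P1: "rp 3 M 1 0 0 = M 0 0"
    "rp 3 M 1 0 1 = M 0 1"
    "rp 3 M 1 0 2 = M 0 2"
    "rp 3 M 1 1 0 = M 1 0"
    "rp 3 M 1 1 1 = M 1 1"
    "rp 3 M 1 1 2 = M 1 2"
    "rp 3 M 1 2 0 = M 2 0"
    "rp 3 M 1 2 1 = M 2 1"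
    "rp 3 M 1 2 2 = M 2 2"
    by (simp_all add: sum3)
  have P2: "rp 3 M 2 0 0 = (M 0 1 * M 1 0) + (M 0 2 * M 2 0)"
    "rp 3 M 2 0 1 = (M 0 0 * M 0 1) + (M 0 1 * M 1 1) + (M 0 2 * M 2 1)"
    "rp 3 M 2 0 2 = (M 0 0 * M 0 2) + (M 0 1 * M 1 2) + (M 0 2 * M 2 2)"
    "rp 3 M 2 1 0 = (- (M 0 0 * M 1 0)) + (- (M 1 0 * M 1 1)) + (M 1 2 * M 2 0)"
    "rp 3 M 2 1 1 = (- (M 0 1 * M 1 0)) + (M 1 2 * M 2 1)"
    "rp 3 M 2 1 2 = (- (M 0 2 * M 1 0)) + (M 1 1 * M 1 2) + (M 1 2 * M 2 2)"
    "rp 3 M 2 2 0 = (- (M 0 0 * M 2 0)) + (- (M 1 0 * M 2 1)) + (- (M 2 0 * M 2 2))"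
    "rp 3 M 2 2 1 = (- (M 0 1 * M 2 0)) + (- (M 1 1 * M 2 1)) + (- (M 2 1 * M 2 2))"
    "rp 3 M 2 2 2 = (- (M 0 2 * M 2 0)) + (- (M 1 2 * M 2 1))"
    by (simp_all only: rp2 sum3 P1) (simp_all add: R algebra_simps del: One_nat_def)
  have P3: "rp 3 M 3 0 0 = (M 0 0 * (M 0 1 * M 1 0)) + (M 0 0 * (M 0 1 * M 1 0)) + (M 0 0 * (M 0 2 * M 2 0)) + (M 0 0 * (M 0 2 * M 2 0)) + (- (M 0 1 * (M 1 0 * M 1 1))) + (M 0 1 * (M 1 2 * M 2 0)) + (- (M 0 2 * (M 1 0 * M 2 1))) + (- (M 0 2 * (M 2 0 * M 2 2)))"
    "rp 3 M 3 0 1 = (M 0 0 * (M 0 1 * M 1 1)) + (M 0 0 * (M 0 2 * M 2 1)) + (M 0 1 * (M 0 2 * M 2 0)) + (M 0 1 * (M 1 2 * M 2 1)) + (- (M 0 2 * (M 1 1 * M 2 1))) + (- (M 0 2 * (M 2 1 * M 2 2)))"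
    "rp 3 M 3 0 2 = (M 0 0 * (M 0 1 * M 1 2)) + (M 0 0 * (M 0 2 * M 2 2)) + (- (M 0 1 * (M 0 2 * M 1 0))) + (M 0 1 * (M 1 1 * M 1 2)) + (M 0 1 * (M 1 2 * M 2 2)) + (- (M 0 2 * (M 1 2 * M 2 1)))"
    "rp 3 M 3 1 0 = (- (M 0 0 * (M 1 0 * M 1 1))) + (M 0 0 * (M 1 2 * M 2 0)) + (- (M 0 2 * (M 1 0 * M 2 0))) + (M 1 0 * (M 1 2 * M 2 1)) + (M 1 1 * (M 1 2 * M 2 0)) + (- (M 1 2 * (M 2 0 * M 2 2)))"
    "rp 3 M 3 1 1 = (M 0 0 * (M 0 1 * M 1 0)) + (- (M 0 1 * (M 1 0 * M 1 1))) + (- (M 0 1 * (M 1 0 * M 1 1))) + (M 0 1 * (M 1 2 * M 2 0)) + (- (M 0 2 * (M 1 0 * M 2 1))) + (M 1 1 * (M 1 2 * M 2 1)) + (M 1 1 * (M 1 2 * M 2 1)) + (- (M 1 2 * (M 2 1 * M 2 2)))"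
    "rp 3 M 3 1 2 = (M 0 0 * (M 0 2 * M 1 0)) + (- (M 0 1 * (M 1 0 * M 1 2))) + (- (M 0 2 * (M 1 0 * M 1 1))) + (- (M 0 2 * (M 1 0 * M 2 2))) + (M 0 2 * (M 1 2 * M 2 0)) + (M 1 1 * (M 1 2 * M 2 2))"
    "rp 3 M 3 2 0 = (- (M 0 0 * (M 1 0 * M 2 1))) + (- (M 0 0 * (M 2 0 * M 2 2))) + (M 0 1 * (M 1 0 * M 2 0)) + (- (M 1 0 * (M 1 1 * M 2 1))) + (- (M 1 0 * (M 2 1 * M 2 2))) + (M 1 2 * (M 2 0 * M 2 1))"
    "rp 3 M 3 2 1 = (M 0 0 * (M 0 1 * M 2 0)) + (- (M 0 1 * (M 1 0 * M 2 1))) + (M 0 1 * (M 1 1 * M 2 0)) + (- (M 0 1 * (M 2 0 * M 2 2))) + (- (M 0 2 * (M 2 0 * M 2 1))) + (- (M 1 1 * (M 2 1 * M 2 2)))"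
    "rp 3 M 3 2 2 = (M 0 0 * (M 0 2 * M 2 0)) + (M 0 1 * (M 1 2 * M 2 0)) + (- (M 0 2 * (M 1 0 * M 2 1))) + (- (M 0 2 * (M 2 0 * M 2 2))) + (- (M 0 2 * (M 2 0 * M 2 2))) + (M 1 1 * (M 1 2 * M 2 1)) + (- (M 1 2 * (M 2 1 * M 2 2))) + (- (M 1 2 * (M 2 1 * M 2 2)))"
    by (simp_all only: rp3 sum3 P2) (simp_all add: R algebra_simps del: One_nat_def)
  have P4: "rp 3 M 4 0 0 = (- (M 0 1 * (M 0 2 * (M 1 0 * M 2 0)))) + (- (M 0 1 * (M 0 2 * (M 1 0 * M 2 0)))) + (M 0 1 * (M 1 0 * (M 1 2 * M 2 1))) + (M 0 1 * (M 1 1 * (M 1 2 * M 2 0))) + (- (M 0 1 * (M 1 2 * (M 2 0 * M 2 2)))) + (- (M 0 2 * (M 1 0 * (M 1 1 * M 2 1)))) + (- (M 0 2 * (M 1 0 * (M 2 1 * M 2 2)))) + (M 0 2 * (M 1 2 * (M 2 0 * M 2 1)))"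
    "rp 3 M 4 0 1 = (M 0 0 * (M 0 1 * (M 0 2 * M 2 0))) + (M 0 0 * (M 0 1 * (M 0 2 * M 2 0))) + (M 0 0 * (M 0 1 * (M 1 2 * M 2 1))) + (- (M 0 0 * (M 0 2 * (M 1 1 * M 2 1)))) + (- (M 0 0 * (M 0 2 * (M 2 1 * M 2 2)))) + (- (M 0 1 * (M 0 2 * (M 1 1 * M 2 0)))) + (M 0 1 * (M 0 2 * (M 2 0 * M 2 2))) + (M 0 1 * (M 1 1 * (M 1 2 * M 2 1))) + (M 0 1 * (M 1 1 * (M 1 2 * M 2 1))) + (- (M 0 1 * (M 1 2 * (M 2 1 * M 2 2)))) + (- (M 0 2 * (M 1 1 * (M 2 1 * M 2 2))))"
    "rp 3 M 4 0 2 = (- (M 0 0 * (M 0 1 * (M 0 2 * M 1 0)))) + (- (M 0 0 * (M 0 1 * (M 0 2 * M 1 0)))) + (M 0 0 * (M 0 1 * (M 1 1 * M 1 2))) + (M 0 0 * (M 0 1 * (M 1 2 * M 2 2))) + (- (M 0 0 * (M 0 2 * (M 1 2 * M 2 1)))) + (- (M 0 1 * (M 0 2 * (M 1 0 * M 1 1)))) + (- (M 0 1 * (M 0 2 * (M 1 0 * M 2 2)))) + (M 0 1 * (M 1 1 * (M 1 2 * M 2 2))) + (M 0 2 * (M 1 1 * (M 1 2 * M 2 1))) + (- (M 0 2 * (M 1 2 * (M 2 1 * M 2 2)))) + (- (M 0 2 * (M 1 2 * (M 2 1 * M 2 2))))"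
    "rp 3 M 4 1 0 = (M 0 0 * (M 0 2 * (M 1 0 * M 2 0))) + (M 0 0 * (M 0 2 * (M 1 0 * M 2 0))) + (- (M 0 0 * (M 1 0 * (M 1 2 * M 2 1)))) + (- (M 0 0 * (M 1 1 * (M 1 2 * M 2 0)))) + (M 0 0 * (M 1 2 * (M 2 0 * M 2 2))) + (- (M 0 2 * (M 1 0 * (M 1 1 * M 2 0)))) + (M 0 2 * (M 1 0 * (M 2 0 * M 2 2))) + (- (M 1 0 * (M 1 1 * (M 1 2 * M 2 1)))) + (- (M 1 0 * (M 1 1 * (M 1 2 * M 2 1)))) + (M 1 0 * (M 1 2 * (M 2 1 * M 2 2))) + (- (M 1 1 * (M 1 2 * (M 2 0 * M 2 2))))"
    "rp 3 M 4 1 1 = (M 0 0 * (M 0 1 * (M 1 2 * M 2 0))) + (M 0 0 * (M 0 2 * (M 1 0 * M 2 1))) + (M 0 1 * (M 0 2 * (M 1 0 * M 2 0))) + (- (M 0 1 * (M 1 0 * (M 1 2 * M 2 1)))) + (- (M 0 1 * (M 1 0 * (M 1 2 * M 2 1)))) + (M 0 1 * (M 1 2 * (M 2 0 * M 2 2))) + (M 0 2 * (M 1 0 * (M 2 1 * M 2 2))) + (M 0 2 * (M 1 2 * (M 2 0 * M 2 1)))"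
    "rp 3 M 4 1 2 = (M 0 0 * (M 0 1 * (M 1 0 * M 1 2))) + (- (M 0 0 * (M 0 2 * (M 1 0 * M 1 1)))) + (M 0 0 * (M 0 2 * (M 1 0 * M 2 2))) + (M 0 0 * (M 0 2 * (M 1 2 * M 2 0))) + (- (M 0 1 * (M 1 0 * (M 1 1 * M 1 2)))) + (- (M 0 1 * (M 1 0 * (M 1 1 * M 1 2)))) + (- (M 0 1 * (M 1 0 * (M 1 2 * M 2 2)))) + (- (M 0 2 * (M 1 0 * (M 1 1 * M 2 2)))) + (- (M 0 2 * (M 1 1 * (M 1 2 * M 2 0)))) + (M 0 2 * (M 1 2 * (M 2 0 * M 2 2))) + (M 0 2 * (M 1 2 * (M 2 0 * M 2 2)))"
    "rp 3 M 4 2 0 = (- (M 0 0 * (M 0 1 * (M 1 0 * M 2 0)))) + (- (M 0 0 * (M 0 1 * (M 1 0 * M 2 0)))) + (M 0 0 * (M 1 0 * (M 1 1 * M 2 1))) + (M 0 0 * (M 1 0 * (M 2 1 * M 2 2))) + (- (M 0 0 * (M 1 2 * (M 2 0 * M 2 1)))) + (M 0 1 * (M 1 0 * (M 1 1 * M 2 0))) + (- (M 0 1 * (M 1 0 * (M 2 0 * M 2 2)))) + (M 1 0 * (M 1 1 * (M 2 1 * M 2 2))) + (- (M 1 1 * (M 1 2 * (M 2 0 * M 2 1)))) + (- (M 1 2 * (M 2 0 * (M 2 1 * M 2 2)))) + (- (M 1 2 * (M 2 0 * (M 2 1 * M 2 2))))"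
    "rp 3 M 4 2 1 = (- (M 0 0 * (M 0 1 * (M 1 0 * M 2 1)))) + (- (M 0 0 * (M 0 1 * (M 1 1 * M 2 0)))) + (- (M 0 0 * (M 0 1 * (M 2 0 * M 2 2)))) + (M 0 0 * (M 0 2 * (M 2 0 * M 2 1))) + (M 0 1 * (M 1 0 * (M 1 1 * M 2 1))) + (M 0 1 * (M 1 0 * (M 1 1 * M 2 1))) + (M 0 1 * (M 1 0 * (M 2 1 * M 2 2))) + (- (M 0 1 * (M 1 1 * (M 2 0 * M 2 2)))) + (- (M 0 2 * (M 1 1 * (M 2 0 * M 2 1)))) + (M 0 2 * (M 2 0 * (M 2 1 * M 2 2))) + (M 0 2 * (M 2 0 * (M 2 1 * M 2 2)))"
    "rp 3 M 4 2 2 = (- (M 0 0 * (M 0 1 * (M 1 2 * M 2 0)))) + (- (M 0 0 * (M 0 2 * (M 1 0 * M 2 1)))) + (M 0 1 * (M 0 2 * (M 1 0 * M 2 0))) + (M 0 1 * (M 1 0 * (M 1 2 * M 2 1))) + (- (M 0 1 * (M 1 1 * (M 1 2 * M 2 0)))) + (M 0 2 * (M 1 0 * (M 1 1 * M 2 1))) + (- (M 0 2 * (M 1 2 * (M 2 0 * M 2 1)))) + (- (M 0 2 * (M 1 2 * (M 2 0 * M 2 1))))"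
    by (simp_all only: rp4 sum3 P3) (simp_all add: R algebra_simps del: One_nat_def)
  have P5: "rp 3 M 5 0 0 = (- (M 0 0 * (M 0 1 * (M 0 2 * (M 1 0 * M 2 0))))) + (- (M 0 0 * (M 0 1 * (M 0 2 * (M 1 0 * M 2 0))))) + (- (M 0 0 * (M 0 1 * (M 0 2 * (M 1 0 * M 2 0))))) + (- (M 0 0 * (M 0 1 * (M 0 2 * (M 1 0 * M 2 0))))) + (- (M 0 0 * (M 0 1 * (M 0 2 * (M 1 0 * M 2 0))))) + (- (M 0 0 * (M 0 1 * (M 0 2 * (M 1 0 * M 2 0))))) + (M 0 0 * (M 0 1 * (M 1 0 * (M 1 2 * M 2 1)))) + (M 0 0 * (M 0 1 * (M 1 0 * (M 1 2 * M 2 1)))) + (M 0 0 * (M 0 1 * (M 1 1 * (M 1 2 * M 2 0)))) + (M 0 0 * (M 0 1 * (M 1 1 * (M 1 2 * M 2 0)))) + (- (M 0 0 * (M 0 1 * (M 1 2 * (M 2 0 * M 2 2))))) + (- (M 0 0 * (M 0 1 * (M 1 2 * (M 2 0 * M 2 2))))) + (- (M 0 0 * (M 0 2 * (M 1 0 * (M 1 1 * M 2 1))))) + (- (M 0 0 * (M 0 2 * (M 1 0 * (M 1 1 * M 2 1))))) + (- (M 0 0 * (M 0 2 * (M 1 0 * (M 2 1 * M 2 2))))) + (- (M 0 0 * (M 0 2 * (M 1 0 * (M 2 1 * M 2 2))))) + (M 0 0 * (M 0 2 * (M 1 2 * (M 2 0 * M 2 1)))) + (M 0 0 * (M 0 2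 * (M 1 2 * (M 2 0 * M 2 1)))) + (- (M 0 1 * (M 0 2 * (M 1 0 * (M 1 1 * M 2 0))))) + (- (M 0 1 * (M 0 2 * (M 1 0 * (M 1 1 * M 2 0))))) + (M 0 1 * (M 0 2 * (M 1 0 * (M 2 0 * M 2 2)))) + (M 0 1 * (M 0 2 * (M 1 0 * (M 2 0 * M 2 2)))) + (- (M 0 1 * (M 1 0 * (M 1 1 * (M 1 2 * M 2 1))))) + (- (M 0 1 * (M 1 0 * (M 1 1 * (M 1 2 * M 2 1))))) + (M 0 1 * (M 1 0 * (M 1 2 * (M 2 1 * M 2 2)))) + (- (M 0 1 * (M 1 1 * (M 1 2 * (M 2 0 * M 2 2))))) + (M 0 2 * (M 1 0 * (M 1 1 * (M 2 1 * M 2 2)))) + (- (M 0 2 * (M 1 1 * (M 1 2 * (M 2 0 * M 2 1))))) + (- (M 0 2 * (M 1 2 * (M 2 0 * (M 2 1 * M 2 2))))) + (- (M 0 2 * (M 1 2 * (M 2 0 * (M 2 1 * M 2 2)))))"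
    "rp 3 M 5 0 1 = (- (M 0 0 * (M 0 1 * (M 0 2 * (M 1 0 * M 2 1))))) + (- (M 0 0 * (M 0 1 * (M 0 2 * (M 1 0 * M 2 1))))) + (- (M 0 0 * (M 0 1 * (M 0 2 * (M 1 1 * M 2 0))))) + (- (M 0 0 * (M 0 1 * (M 0 2 * (M 1 1 * M 2 0))))) + (M 0 0 * (M 0 1 * (M 1 1 * (M 1 2 * M 2 1)))) + (M 0 0 * (M 0 1 * (M 1 1 * (M 1 2 * M 2 1)))) + (- (M 0 0 * (M 0 1 * (M 1 2 * (M 2 1 * M 2 2))))) + (- (M 0 0 * (M 0 2 * (M 1 1 * (M 2 1 * M 2 2))))) + (- (M 0 1 * (M 0 2 * (M 1 0 * (M 1 1 * M 2 1))))) + (- (M 0 1 * (M 0 2 * (M 1 0 * (M 1 1 * M 2 1))))) + (M 0 1 * (M 0 2 * (M 1 1 * (M 2 0 * M 2 2)))) + (M 0 1 * (M 0 2 * (M 1 2 * (M 2 0 * M 2 1))))"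
    "rp 3 M 5 0 2 = (- (M 0 0 * (M 0 1 * (M 0 2 * (M 1 0 * M 2 2))))) + (- (M 0 0 * (M 0 1 * (M 0 2 * (M 1 0 * M 2 2))))) + (- (M 0 0 * (M 0 1 * (M 0 2 * (M 1 2 * M 2 0))))) + (- (M 0 0 * (M 0 1 * (M 0 2 * (M 1 2 * M 2 0))))) + (M 0 0 * (M 0 1 * (M 1 1 * (M 1 2 * M 2 2)))) + (M 0 0 * (M 0 2 * (M 1 1 * (M 1 2 * M 2 1)))) + (- (M 0 0 * (M 0 2 * (M 1 2 * (M 2 1 * M 2 2))))) + (- (M 0 0 * (M 0 2 * (M 1 2 * (M 2 1 * M 2 2))))) + (- (M 0 1 * (M 0 2 * (M 1 0 * (M 1 1 * M 2 2))))) + (- (M 0 1 * (M 0 2 * (M 1 0 * (M 1 2 * M 2 1))))) + (M 0 1 * (M 0 2 * (M 1 2 * (M 2 0 * M 2 2)))) + (M 0 1 * (M 0 2 * (M 1 2 * (M 2 0 * M 2 2))))"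
    "rp 3 M 5 1 0 = (M 0 0 * (M 0 1 * (M 1 0 * (M 1 2 * M 2 0)))) + (M 0 0 * (M 0 1 * (M 1 0 * (M 1 2 * M 2 0)))) + (- (M 0 0 * (M 0 2 * (M 1 0 * (M 1 1 * M 2 0))))) + (- (M 0 0 * (M 0 2 * (M 1 0 * (M 1 1 * M 2 0))))) + (- (M 0 0 * (M 1 0 * (M 1 1 * (M 1 2 * M 2 1))))) + (- (M 0 0 * (M 1 0 * (M 1 1 * (M 1 2 * M 2 1))))) + (M 0 0 * (M 1 0 * (M 1 2 * (M 2 1 * M 2 2)))) + (- (M 0 0 * (M 1 1 * (M 1 2 * (M 2 0 * M 2 2))))) + (- (M 0 1 * (M 1 0 * (M 1 1 * (M 1 2 * M 2 0))))) + (- (M 0 1 * (M 1 0 * (M 1 1 * (M 1 2 * M 2 0))))) + (M 0 2 * (M 1 0 * (M 1 1 * (M 2 0 * M 2 2)))) + (- (M 0 2 * (M 1 0 * (M 1 2 * (M 2 0 * M 2 1)))))"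
    "rp 3 M 5 1 1 = (- (M 0 0 * (M 0 1 * (M 0 2 * (M 1 0 * M 2 0))))) + (- (M 0 0 * (M 0 1 * (M 0 2 * (M 1 0 * M 2 0))))) + (M 0 0 * (M 0 1 * (M 1 0 * (M 1 2 * M 2 1)))) + (M 0 0 * (M 0 1 * (M 1 0 * (M 1 2 * M 2 1)))) + (M 0 0 * (M 0 1 * (M 1 1 * (M 1 2 * M 2 0)))) + (M 0 0 * (M 0 1 * (M 1 1 * (M 1 2 * M 2 0)))) + (- (M 0 0 * (M 0 1 * (M 1 2 * (M 2 0 * M 2 2))))) + (- (M 0 0 * (M 0 2 * (M 1 0 * (M 1 1 * M 2 1))))) + (- (M 0 0 * (M 0 2 * (M 1 0 * (M 1 1 * M 2 1))))) + (- (M 0 0 * (M 0 2 * (M 1 0 * (M 2 1 * M 2 2))))) + (M 0 0 * (M 0 2 * (M 1 2 * (M 2 0 * M 2 1)))) + (- (M 0 1 * (M 0 2 * (M 1 0 * (M 1 1 * M 2 0))))) + (- (M 0 1 * (M 0 2 * (M 1 0 * (M 1 1 * M 2 0))))) + (M 0 1 * (M 0 2 * (M 1 0 * (M 2 0 * M 2 2)))) + (- (M 0 1 * (M 1 0 * (M 1 1 * (M 1 2 * M 2 1))))) + (- (M 0 1 * (M 1 0 * (M 1 1 * (M 1 2 * M 2 1))))) + (- (M 0 1 * (M 1 0 * (M 1 1 * (M 1 2 * M 2 1))))) + (- (M 0 1 * (M 1 0 * (M 1 1 * (M 1 2 * M 2 1))))) + (- (M 0 1 * (M 1 0 * (M 1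 1 * (M 1 2 * M 2 1))))) + (- (M 0 1 * (M 1 0 * (M 1 1 * (M 1 2 * M 2 1))))) + (M 0 1 * (M 1 0 * (M 1 2 * (M 2 1 * M 2 2)))) + (M 0 1 * (M 1 0 * (M 1 2 * (M 2 1 * M 2 2)))) + (- (M 0 1 * (M 1 1 * (M 1 2 * (M 2 0 * M 2 2))))) + (- (M 0 1 * (M 1 1 * (M 1 2 * (M 2 0 * M 2 2))))) + (M 0 2 * (M 1 0 * (M 1 1 * (M 2 1 * M 2 2)))) + (M 0 2 * (M 1 0 * (M 1 1 * (M 2 1 * M 2 2)))) + (- (M 0 2 * (M 1 1 * (M 1 2 * (M 2 0 * M 2 1))))) + (- (M 0 2 * (M 1 1 * (M 1 2 * (M 2 0 * M 2 1))))) + (- (M 0 2 * (M 1 2 * (M 2 0 * (M 2 1 * M 2 2))))) + (- (M 0 2 * (M 1 2 * (M 2 0 * (M 2 1 * M 2 2)))))"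
    "rp 3 M 5 1 2 = (M 0 0 * (M 0 1 * (M 1 0 * (M 1 2 * M 2 2)))) + (- (M 0 0 * (M 0 2 * (M 1 0 * (M 1 1 * M 2 2))))) + (M 0 0 * (M 0 2 * (M 1 1 * (M 1 2 * M 2 0)))) + (- (M 0 1 * (M 0 2 * (M 1 0 * (M 1 2 * M 2 0))))) + (- (M 0 1 * (M 1 0 * (M 1 1 * (M 1 2 * M 2 2))))) + (- (M 0 1 * (M 1 0 * (M 1 1 * (M 1 2 * M 2 2))))) + (- (M 0 2 * (M 1 0 * (M 1 1 * (M 1 2 * M 2 1))))) + (- (M 0 2 * (M 1 0 * (M 1 1 * (M 1 2 * M 2 1))))) + (M 0 2 * (M 1 0 * (M 1 2 * (M 2 1 * M 2 2)))) + (M 0 2 * (M 1 0 * (M 1 2 * (M 2 1 * M 2 2)))) + (- (M 0 2 * (M 1 1 * (M 1 2 * (M 2 0 * M 2 2))))) + (- (M 0 2 * (M 1 1 * (M 1 2 * (M 2 0 * M 2 2)))))"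
    "rp 3 M 5 2 0 = (- (M 0 0 * (M 0 1 * (M 1 0 * (M 2 0 * M 2 2))))) + (- (M 0 0 * (M 0 1 * (M 1 0 * (M 2 0 * M 2 2))))) + (M 0 0 * (M 0 2 * (M 1 0 * (M 2 0 * M 2 1)))) + (M 0 0 * (M 0 2 * (M 1 0 * (M 2 0 * M 2 1)))) + (M 0 0 * (M 1 0 * (M 1 1 * (M 2 1 * M 2 2)))) + (- (M 0 0 * (M 1 1 * (M 1 2 * (M 2 0 * M 2 1))))) + (- (M 0 0 * (M 1 2 * (M 2 0 * (M 2 1 * M 2 2))))) + (- (M 0 0 * (M 1 2 * (M 2 0 * (M 2 1 * M 2 2))))) + (M 0 1 * (M 1 0 * (M 1 1 * (M 2 0 * M 2 2)))) + (- (M 0 1 * (M 1 0 * (M 1 2 * (M 2 0 * M 2 1))))) + (- (M 0 2 * (M 1 0 * (M 2 0 * (M 2 1 * M 2 2))))) + (- (M 0 2 * (M 1 0 * (M 2 0 * (M 2 1 * M 2 2)))))"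
    "rp 3 M 5 2 1 = (- (M 0 0 * (M 0 1 * (M 1 0 * (M 2 1 * M 2 2))))) + (- (M 0 0 * (M 0 1 * (M 1 1 * (M 2 0 * M 2 2))))) + (M 0 0 * (M 0 2 * (M 1 1 * (M 2 0 * M 2 1)))) + (M 0 1 * (M 0 2 * (M 1 0 * (M 2 0 * M 2 1)))) + (M 0 1 * (M 1 0 * (M 1 1 * (M 2 1 * M 2 2)))) + (M 0 1 * (M 1 0 * (M 1 1 * (M 2 1 * M 2 2)))) + (- (M 0 1 * (M 1 1 * (M 1 2 * (M 2 0 * M 2 1))))) + (- (M 0 1 * (M 1 1 * (M 1 2 * (M 2 0 * M 2 1))))) + (- (M 0 1 * (M 1 2 * (M 2 0 * (M 2 1 * M 2 2))))) + (- (M 0 1 * (M 1 2 * (M 2 0 * (M 2 1 * M 2 2))))) + (- (M 0 2 * (M 1 1 * (M 2 0 * (M 2 1 * M 2 2))))) + (- (M 0 2 * (M 1 1 * (M 2 0 * (M 2 1 * M 2 2)))))"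
    "rp 3 M 5 2 2 = (- (M 0 0 * (M 0 1 * (M 0 2 * (M 1 0 * M 2 0))))) + (- (M 0 0 * (M 0 1 * (M 0 2 * (M 1 0 * M 2 0))))) + (M 0 0 * (M 0 1 * (M 1 0 * (M 1 2 * M 2 1)))) + (M 0 0 * (M 0 1 * (M 1 1 * (M 1 2 * M 2 0)))) + (- (M 0 0 * (M 0 1 * (M 1 2 * (M 2 0 * M 2 2))))) + (- (M 0 0 * (M 0 1 * (M 1 2 * (M 2 0 * M 2 2))))) + (- (M 0 0 * (M 0 2 * (M 1 0 * (M 1 1 * M 2 1))))) + (- (M 0 0 * (M 0 2 * (M 1 0 * (M 2 1 * M 2 2))))) + (- (M 0 0 * (M 0 2 * (M 1 0 * (M 2 1 * M 2 2))))) + (M 0 0 * (M 0 2 * (M 1 2 * (M 2 0 * M 2 1)))) + (M 0 0 * (M 0 2 * (M 1 2 * (M 2 0 * M 2 1)))) + (- (M 0 1 * (M 0 2 * (M 1 0 * (M 1 1 * M 2 0))))) + (M 0 1 * (M 0 2 * (M 1 0 * (M 2 0 * M 2 2)))) + (M 0 1 * (M 0 2 * (M 1 0 * (M 2 0 * M 2 2)))) + (- (M 0 1 * (M 1 0 * (M 1 1 * (M 1 2 * M 2 1))))) + (- (M 0 1 * (M 1 0 * (M 1 1 * (M 1 2 * M 2 1))))) + (M 0 1 * (M 1 0 * (M 1 2 * (M 2 1 * M 2 2)))) + (M 0 1 * (M 1 0 * (M 1 2 * (M 2 1 * M 2 2)))) + (- (M 0 1 * (M 1 1 * (M 1 2 *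 (M 2 0 * M 2 2))))) + (- (M 0 1 * (M 1 1 * (M 1 2 * (M 2 0 * M 2 2))))) + (M 0 2 * (M 1 0 * (M 1 1 * (M 2 1 * M 2 2)))) + (M 0 2 * (M 1 0 * (M 1 1 * (M 2 1 * M 2 2)))) + (- (M 0 2 * (M 1 1 * (M 1 2 * (M 2 0 * M 2 1))))) + (- (M 0 2 * (M 1 1 * (M 1 2 * (M 2 0 * M 2 1))))) + (- (M 0 2 * (M 1 2 * (M 2 0 * (M 2 1 * M 2 2))))) + (- (M 0 2 * (M 1 2 * (M 2 0 * (M 2 1 * M 2 2))))) + (- (M 0 2 * (M 1 2 * (M 2 0 * (M 2 1 * M 2 2))))) + (- (M 0 2 * (M 1 2 * (M 2 0 * (M 2 1 * M 2 2))))) + (- (M 0 2 * (M 1 2 * (M 2 0 * (M 2 1 * M 2 2))))) + (- (M 0 2 * (M 1 2 * (M 2 0 * (M 2 1 * M 2 2)))))"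
    by (simp_all only: rp5 sum3 P4) (simp_all add: R algebra_simps del: One_nat_def)
  have t2: "(\<Sum>l<3. rp 3 M 2 l l) = 0" by (simp add: sum3 P2 R algebra_simps del: One_nat_def)
  have t4: "(\<Sum>l<3. rp 3 M 4 l l) = 0" by (simp add: sum3 P4 R algebra_simps del: One_nat_def)
  show ?thesis using ij unfolding t2 t4 less3 by (elim disjE) (simp_all add: sum3 P1 P2 P3 P4 P5 R algebra_simps three_r del: One_nat_def)
qed

lemma gE_mpow: "gE (mpow n B k i j) = rp n (\<lambda>i j. gE (B i j)) k i j"
  by (induction k arbitrary: i j) (simp_all add: mmul_def)

lemma gE_mtr: "gE (mtr n A) = (\<Sum>i<n. gE (A i i))"
  by (simp add: mtr_def)

theorem corollary2p7:
  fixes B C :: "'a::field_char_0 gmat"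
  shows "((\<forall>i<2. \<forall>j<2. is_odd_grass (B i j)) \<longrightarrow>
      is_zero_mat 2
        (madd (melt (gsub (gmul (mtr 2 B) (mtr 2 (mpow 2 B 2))) (mtr 2 (mpow 2 B 3))) mone)
        (madd (mscal (-1) (melt (mtr 2 (mpow 2 B 2)) B))
        (madd (mscal (-1) (melt (mtr 2 B) (mpow 2 B 2)))
              (mscal 2 (mpow 2 B 3)))))) \<and>
      ((\<forall>i<3. \<forall>j<3. is_odd_grass (C i j)) \<longrightarrow>
      is_zero_mat 3
        (madd (melt
           (gadd (gscal (- 1/2) (gmul (gmul (mtr 3 (mpow 3 C 2)) (mtr 3 (mpow 3 C 2))) (mtr 3 C)))
           (gadd (gmul (mtr 3 (mpow 3 C 3)) (mtr 3 (mpow 3 C 2)))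
           (gadd (gscal (1/2) (gmul (mtr 3 (mpow 3 C 4)) (mtr 3 C)))
                 (gscal (-1) (mtr 3 (mpow 3 C 5)))))) mone)
        (madd (melt
           (gadd (gscal (1/2) (gmul (mtr 3 (mpow 3 C 2)) (mtr 3 (mpow 3 C 2))))
                 (gscal (- 1/2) (mtr 3 (mpow 3 C 4)))) C)
        (madd (melt (gsub (gmul (mtr 3 (mpow 3 C 2)) (mtr 3 C)) (mtr 3 (mpow 3 C 3))) (mpow 3 C 2))
        (madd (mscal (-2) (melt (mtr 3 (mpow 3 C 2)) (mpow 3 C 3)))
        (madd (mscal (-1) (melt (mtr 3 C) (mpow 3 C 4)))
              (mscal 3 (mpow 3 C 5))))))))"
proof (intro conjI impI)
  assume H: "\<forall>i<2. \<forall>j<2. is_odd_grass (B i j)"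
  have ac: "\<And>i j k l. i<2 \<Longrightarrow> j<2 \<Longrightarrow> k<2 \<Longrightarrow> l<2 \<Longrightarrow>
      gE (B i j) * gE (B k l) = - (gE (B k l) * gE (B i j))" using H gE_anti by blast
  have sq: "\<And>i j. i<2 \<Longrightarrow> j<2 \<Longrightarrow> gE (B i j) * gE (B i j) = 0" using H gE_sq by blast
  show "is_zero_mat 2
        (madd (melt (gsub (gmul (mtr 2 B) (mtr 2 (mpow 2 B 2))) (mtr 2 (mpow 2 B 3))) mone)
        (madd (mscal (-1) (melt (mtr 2 (mpow 2 B 2)) B))
        (madd (mscal (-1) (melt (mtr 2 B) (mpow 2 B 2)))
              (mscal 2 (mpow 2 B 3)))))"
    unfolding is_zero_mat_def madd_def melt_def mscal_def
  proof (intro allI impI)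
    fix i j :: nat assume ij: "i < 2" "j < 2"
    show "gadd (gmul (gsub (gmul (mtr 2 B) (mtr 2 (mpow 2 B 2))) (mtr 2 (mpow 2 B 3))) (mone i j))
          (gadd (gscal (-1) (gmul (mtr 2 (mpow 2 B 2)) (B i j)))
           (gadd (gscal (-1) (gmul (mtr 2 B) (mpow 2 B 2 i j))) (gscal 2 (mpow 2 B 3 i j)))) = gzero"
      by (rule gE_inj, simp, simp only: gE_add gE_mul gE_sub gE_scal gE_mone gE_mpow gE_mtr sc_m1 sc_2 sc_3,
          rule abs2[where M = "\<lambda>i j. gE (B i j)"], (fact ac sq ij)+)
  qed
next
  assume H: "\<forall>i<3. \<forall>j<3. is_odd_grass (C i j)"
  have ac: "\<And>i j k l. i<3 \<Longrightarrow> j<3 \<Longrightarrow> k<3 \<Longrightarrow> l<3 \<Longrightarrow>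
      gE (C i j) * gE (C k l) = - (gE (C k l) * gE (C i j))" using H gE_anti by blast
  have sq: "\<And>i j. i<3 \<Longrightarrow> j<3 \<Longrightarrow> gE (C i j) * gE (C i j) = 0" using H gE_sq by blast
  show "is_zero_mat 3
        (madd (melt
           (gadd (gscal (- 1/2) (gmul (gmul (mtr 3 (mpow 3 C 2)) (mtr 3 (mpow 3 C 2))) (mtr 3 C)))
           (gadd (gmul (mtr 3 (mpow 3 C 3)) (mtr 3 (mpow 3 C 2)))
           (gadd (gscal (1/2) (gmul (mtr 3 (mpow 3 C 4)) (mtr 3 C)))
                 (gscal (-1) (mtr 3 (mpow 3 C 5)))))) mone)
        (madd (melt
           (gadd (gscal (1/2) (gmul (mtr 3 (mpow 3 C 2)) (mtr 3 (mpow 3 C 2))))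
                 (gscal (- 1/2) (mtr 3 (mpow 3 C 4)))) C)
        (madd (melt (gsub (gmul (mtr 3 (mpow 3 C 2)) (mtr 3 C)) (mtr 3 (mpow 3 C 3))) (mpow 3 C 2))
        (madd (mscal (-2) (melt (mtr 3 (mpow 3 C 2)) (mpow 3 C 3)))
        (madd (mscal (-1) (melt (mtr 3 C) (mpow 3 C 4)))
              (mscal 3 (mpow 3 C 5)))))))"
    unfolding is_zero_mat_def
  proof (intro allI impI)
    fix i j :: nat assume ij: "i < 3" "j < 3"
    show "madd (melt
           (gadd (gscal (- 1/2) (gmul (gmul (mtr 3 (mpow 3 C 2)) (mtr 3 (mpow 3 C 2))) (mtr 3 C)))
           (gadd (gmul (mtr 3 (mpow 3 C 3)) (mtr 3 (mpow 3 C 2)))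
           (gadd (gscal (1/2) (gmul (mtr 3 (mpow 3 C 4)) (mtr 3 C)))
                 (gscal (-1) (mtr 3 (mpow 3 C 5)))))) mone)
        (madd (melt
           (gadd (gscal (1/2) (gmul (mtr 3 (mpow 3 C 2)) (mtr 3 (mpow 3 C 2))))
                 (gscal (- 1/2) (mtr 3 (mpow 3 C 4)))) C)
        (madd (melt (gsub (gmul (mtr 3 (mpow 3 C 2)) (mtr 3 C)) (mtr 3 (mpow 3 C 3))) (mpow 3 C 2))
        (madd (mscal (-2) (melt (mtr 3 (mpow 3 C 2)) (mpow 3 C 3)))
        (madd (mscal (-1) (melt (mtr 3 C) (mpow 3 C 4)))
              (mscal 3 (mpow 3 C 5)))))) i j = gzero"
      unfolding madd_def melt_def mscal_def
      by (rule gE_inj, simp, simp only: gE_add gE_mul gE_sub gE_scal gE_mone gE_mpow gE_mtr sc_m1 sc_2 sc_3,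
          rule abs3[where M = "\<lambda>i j. gE (C i j)"], (fact ac sq ij)+)
  qed
qed

end
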